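(* For each choice $\lambda\in\{1,\,2,\,\frac{|V(\mathcal{B})|}{4}\}$, there are infinitely many balanced bipartite graphs $\mathcal{B}$ (with parts $V_1,V_2$, $|V_1|=|V_2|=n=\frac{|V(\mathcal{B})|}{2}$) such that: (i) $\delta(\mathcal{B})\geq \frac{|V(\mathcal{B})|}{4}+1$; and (ii) there exists a subset $S\subseteq V(\mathcal{B})$ with $|S|=\frac{|V(\mathcal{B})|}{2}+1$ such that $\mathcal{B}[S]$ is a forest and $|S\cap V_i|=\lambda$ for some $i\in\{1,2\}$.
   Context: All graphs are finite and simple. A balanced bipartite graph on $2n$ vertices is a bipartite graph with a given bipartition $(V_1,V_2)$ where $|V_1|=|V_2|=n$. $\delta(G)$ denotes the minimum degree of $G$, and $G[S]$ the subgraph induced by $S\subseteq V(G)$. *)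

theory Defs
  imports Complex_Main
begin

definition balanced_bipartite :: "nat \<Rightarrow> 'a set \<Rightarrow> 'a set \<Rightarrow> ('a \<Rightarrow> 'a \<Rightarrow> bool) \<Rightarrow> bool" where
  "balanced_bipartite n V1 V2 E \<longleftrightarrow>
     finite V1 \<and> finite V2 \<and> V1 \<inter> V2 = {} \<and> card V1 = n \<and> card V2 = n \<and>
     (\<forall>u v. E u v \<longrightarrow> E v u) \<and> (\<forall>v. \<not> E v v) \<and>
     (\<forall>u v. E u v \<longrightarrow> (u \<in> V1 \<and> v \<in> V2) \<or> (u \<in> V2 \<and> v \<in> V1))"

definition degree :: "'a set \<Rightarrow> ('a \<Rightarrow> 'a \<Rightarrow> bool) \<Rightarrow> 'a \<Rightarrow> nat" where
  "degree V E v = card {u \<in> V. E v u}"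

definition has_cycle_in :: "('a \<Rightarrow> 'a \<Rightarrow> bool) \<Rightarrow> 'a set \<Rightarrow> bool" where
  "has_cycle_in E S \<longleftrightarrow> (\<exists>vs. length vs \<ge> 3 \<and> distinct vs \<and> set vs \<subseteq> S \<and>
      (\<forall>i. i + 1 < length vs \<longrightarrow> E (vs ! i) (vs ! (i + 1))) \<and> E (last vs) (hd vs))"

definition induced_forest :: "('a \<Rightarrow> 'a \<Rightarrow> bool) \<Rightarrow> 'a set \<Rightarrow> bool" where
  "induced_forest E S \<longleftrightarrow> \<not> has_cycle_in E S"

end

theory Submission imports Defs "HOL-Number_Theory.Cong" begin
lemma forest_by_order:
  fixes E :: "nat \<Rightarrow> nat \<Rightarrow> bool"
  assumes sym: "\<forall>u v. E u v \<longrightarrow> E v u"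
    and ord: "\<And>v u1 u2. v \<in> S \<Longrightarrow> u1 \<in> S \<Longrightarrow> u2 \<in> S \<Longrightarrow> u1 < v \<Longrightarrow> u2 < v
        \<Longrightarrow> E v u1 \<Longrightarrow> E v u2 \<Longrightarrow> u1 = u2"
  shows "induced_forest E S"
  unfolding induced_forest_def has_cycle_in_def
proof
  assume "\<exists>vs. 3 \<le> length vs \<and> distinct vs \<and> set vs \<subseteq> S \<and>
      (\<forall>i. i + 1 < length vs \<longrightarrow> E (vs ! i) (vs ! (i + 1))) \<and> E (last vs) (hd vs)"
  then obtain vs where L: "3 \<le> length vs" and d: "distinct vs" and sub: "set vs \<subseteq> S"
    and c: "\<forall>i. i + 1 < length vs \<longrightarrow> E (vs ! i) (vs ! (i + 1))" and l: "E (last vs) (hd vs)"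
    by blast
  define L where "L = length vs"
  have cyc: "E (vs ! j) (vs ! ((j+1) mod L))" if "j < L" for j
  proof (cases "j + 1 < L")
    case True then show ?thesis using c L_def by simp
  next
    case False
    then have "j = L - 1" using that by simp
    moreover have "vs \<noteq> []" using L by auto
    ultimately show ?thesis using l L_def
      by (simp add: last_conv_nth hd_conv_nth)
  qed
  have ne: "set vs \<noteq> {}" using L by auto
  define v where "v = Max (set vs)"
  have vin: "v \<in> set vs" using ne v_def by simp
  then obtain i where i: "i < L" "vs ! i = v" using L_def by (metis in_set_conv_nth)
  define p where "p = (i + L - 1) mod L"
  define q where "q = (i + 1) mod L"
  have L3: "L \<ge> 3" using L L_def by simp
  have pL: "p < L" and qL: "q < L" using L3 p_def q_def by auto
  have pq: "p \<noteq> q"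
  proof
    assume "p = q"
    then have "(i + L - 1) mod L = (i + 1) mod L" using p_def q_def by simp
    then have "[i + L - 1 = i + 1] (mod L)" by (simp add: cong_def)
    moreover have "i + L - 1 = (i + 1) + (L - 2)" using L3 by simp
    ultimately have "[(i+1) + (L - 2) = (i+1) + 0] (mod L)" by simp
    then have "[L - 2 = 0] (mod L)" using cong_add_lcancel_nat by blast
    then have "L dvd (L - 2)" by (simp add: cong_0_iff)
    moreover have "L - 2 < L" "0 < L - 2" using L3 by auto
    ultimately show False using nat_dvd_not_less by blast
  qed
  have pi: "p \<noteq> i"
  proof
    assume "p = i"
    then have "(i + L - 1) mod L = i mod L" using p_def i by simp
    then have "[i + (L - 1) = i + 0] (mod L)" using L3 by (simp add: cong_def)
    then have "[L - 1 = 0] (mod L)" using cong_add_lcancel_nat by blast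
    then have "L dvd (L - 1)" by (simp add: cong_0_iff)
    moreover have "L - 1 < L" "0 < L - 1" using L3 by auto
    ultimately show False using nat_dvd_not_less by blast
  qed
  have qi: "q \<noteq> i"
  proof
    assume "q = i"
    then have "(i + 1) mod L = i mod L" using q_def i by simp
    then have "[i + 1 = i + 0] (mod L)" by (simp add: cong_def)
    then have "[1 = 0] (mod L)" using cong_add_lcancel_nat by blast
    then have "L dvd 1" by (simp add: cong_0_iff)
    then show False using L3 by simp
  qed
  have pnext: "(p + 1) mod L = i"
  proof -
    have "(p + 1) mod L = ((i + L - 1) mod L + 1) mod L" using p_def by simp
    also have "\<dots> = (i + L - 1 + 1) mod L" by (simp add: mod_Suc_eq)
    also have "\<dots> = (i + L) mod L" using L3 by simp
    also have "\<dots> = i" using i by simp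
    finally show ?thesis .
  qed
  have e1: "E v (vs ! p)" using cyc[OF pL] pnext i sym by metis
  have e2: "E v (vs ! q)" using cyc[OF i(1)] i q_def by simp
  have fin: "finite (set vs)" by simp
  have vp: "vs ! p < v"
  proof -
    have "vs ! p \<in> set vs" using pL L_def by simp
    then have "vs ! p \<le> v" using v_def fin by simp
    moreover have "vs ! p \<noteq> v" using d pi pL i L_def by (metis nth_eq_iff_index_eq)
    ultimately show ?thesis by simp
  qed
  have vq: "vs ! q < v"
  proof -
    have "vs ! q \<in> set vs" using qL L_def by simp
    then have "vs ! q \<le> v" using v_def fin by simp
    moreover have "vs ! q \<noteq> v" using d qi qL i L_def by (metis nth_eq_iff_index_eq)
    ultimately show ?thesis by simp
  qed
  have "vs ! p = vs ! q"
  proof (rule ord[OF _ _ _ vp vq e1 e2])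
    show "v \<in> S" using vin sub by auto
    show "vs ! p \<in> S" using sub pL L_def nth_mem by blast
    show "vs ! q \<in> S" using sub qL L_def nth_mem by blast
  qed
  then show False using d pq pL qL L_def by (metis nth_eq_iff_index_eq)
qed

lemma deg_ge:
  assumes "finite V" "A \<subseteq> V" "\<forall>u\<in>A. E v u"
  shows "card A \<le> degree V E v"
  unfolding degree_def by (rule card_mono) (use assms in auto)

definition E1 :: "nat \<Rightarrow> nat \<Rightarrow> nat \<Rightarrow> bool" where
  "E1 n u v \<longleftrightarrow> (u < n \<and> n \<le> v \<and> v < 2*n) \<or> (v < n \<and> n \<le> u \<and> u < 2*n)"

lemma case1:
  "\<exists>n\<ge>m. \<exists>(V1::nat set) V2 E.
      balanced_bipartite n V1 V2 E \<and>
      (\<forall>v \<in> V1 \<union> V2. real (degree (V1 \<union> V2) E v) \<ge> real (card (V1 \<union> V2)) / 4 + 1) \<and>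
      (\<exists>S \<subseteq> V1 \<union> V2. card S = card (V1 \<union> V2) div 2 + 1 \<and> induced_forest E S \<and>
         (\<exists>Vi \<in> {V1, V2}. real (card (S \<inter> Vi)) = 1))"
proof -
  define n where "n = m + 2"
  define V1 where "V1 = {0..<n}"
  define V2 where "V2 = {n..<2*n}"
  have U: "V1 \<union> V2 = {0..<2*n}" using V1_def V2_def by auto
  have cU: "card (V1 \<union> V2) = 2*n" using U by simp
  have bb: "balanced_bipartite n V1 V2 (E1 n)"
    unfolding balanced_bipartite_def E1_def V1_def V2_def by auto
  have deg: "real (degree (V1 \<union> V2) (E1 n) v) \<ge> real (card (V1 \<union> V2)) / 4 + 1"
    if "v \<in> V1 \<union> V2" for v
  proof -
    have "n \<le> degree (V1 \<union> V2) (E1 n) v"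
    proof (cases "v < n")
      case True
      then show ?thesis using deg_ge[of "V1 \<union> V2" V2 "E1 n" v] U V1_def V2_def
        by (auto simp: E1_def)
    next
      case False
      then show ?thesis using deg_ge[of "V1 \<union> V2" V1 "E1 n" v] U V1_def V2_def that
        by (auto simp: E1_def)
    qed
    then have "real n \<le> real (degree (V1 \<union> V2) (E1 n) v)" by linarith
    moreover have "real (card (V1 \<union> V2)) / 4 + 1 \<le> real n" using cU n_def by simp
    ultimately show ?thesis by linarith
  qed
  define S where "S = insert 0 V2"
  have cS: "card S = card (V1 \<union> V2) div 2 + 1" using cU S_def V2_def n_def by simp
  have f: "induced_forest (E1 n) S"
    by (rule forest_by_order) (auto simp: E1_def S_def V2_def)
  have "S \<inter> V1 = {0}" using S_def V1_def V2_def n_def by auto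
  then have "real (card (S \<inter> V1)) = 1" by simp
  moreover have "S \<subseteq> V1 \<union> V2" using S_def U n_def by auto
  ultimately show ?thesis using bb deg cS f n_def
    apply -
    apply (rule exI[of _ n])
    apply (rule conjI, simp)
    apply (rule exI[of _ V1], rule exI[of _ V2], rule exI[of _ "E1 n"])
    by blast
qed

definition A1 :: "nat \<Rightarrow> nat set" where "A1 k = {0, k+1} \<union> {2*k+2..<4*k}"
definition B1 :: "nat \<Rightarrow> nat set" where "B1 k = {1..k} \<union> {k+2..2*k+1}"
definition P2 :: "nat \<Rightarrow> nat \<Rightarrow> nat \<Rightarrow> bool" where
  "P2 k u v \<longleftrightarrow> u \<in> A1 k \<and> v \<in> B1 k \<and> (u = 0 \<longrightarrow> v \<le> k \<or> v = 2*k+1) \<and> (u = k+1 \<longrightarrow> k \<le> v)"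
definition E2 :: "nat \<Rightarrow> nat \<Rightarrow> nat \<Rightarrow> bool" where
  "E2 k u v \<longleftrightarrow> P2 k u v \<or> P2 k v u"

lemma case2:
  "\<exists>n\<ge>m. \<exists>(V1::nat set) V2 E.
      balanced_bipartite n V1 V2 E \<and>
      (\<forall>v \<in> V1 \<union> V2. real (degree (V1 \<union> V2) E v) \<ge> real (card (V1 \<union> V2)) / 4 + 1) \<and>
      (\<exists>S \<subseteq> V1 \<union> V2. card S = card (V1 \<union> V2) div 2 + 1 \<and> induced_forest E S \<and>
         (\<exists>Vi \<in> {V1, V2}. real (card (S \<inter> Vi)) = 2))"
proof -
  define k where "k = m + 3"
  define n where "n = 2*k"
  define V1 where "V1 = A1 k"
  define V2 where "V2 = B1 k"
  have k3: "k \<ge> 3" using k_def by simp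
  have dis: "V1 \<inter> V2 = {}" using V1_def V2_def A1_def B1_def k3 by auto
  have c1: "card V1 = n"
  proof -
    have "card ({0, k+1} \<union> {2*k+2..<4*k}) = card {0, k+1} + card {2*k+2..<4*k}"
      by (rule card_Un_disjoint) auto
    then show ?thesis using V1_def A1_def n_def k3 by simp
  qed
  have c2: "card V2 = n"
  proof -
    have "card ({1..k} \<union> {k+2..2*k+1}) = card {1..k} + card {k+2..2*k+1}"
      by (rule card_Un_disjoint) auto
    then show ?thesis using V2_def B1_def n_def k3 by simp
  qed
  have finU: "finite (V1 \<union> V2)" using V1_def V2_def A1_def B1_def by simp
  have cU: "card (V1 \<union> V2) = 4*k" using card_Un_disjoint[of V1 V2] dis c1 c2 n_def
      V1_def V2_def A1_def B1_def by simp
  have bb: "balanced_bipartite n V1 V2 (E2 k)"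
    unfolding balanced_bipartite_def using dis c1 c2 V1_def V2_def
    by (auto simp: E2_def P2_def A1_def B1_def)
  have dk: "k + 1 \<le> degree (V1 \<union> V2) (E2 k) v" if v: "v \<in> V1 \<union> V2" for v
  proof -
    consider "v = 0" | "v = k+1" | "v \<in> {2*k+2..<4*k}" | "v \<in> V2"
      using v V1_def A1_def by auto
    then show ?thesis
    proof cases
      case 1
      have "card ({1..k} \<union> {2*k+1}) = k + 1" by simp
      moreover have "card ({1..k} \<union> {2*k+1}) \<le> degree (V1 \<union> V2) (E2 k) v"
        by (rule deg_ge[OF finU]) (use 1 k3 in \<open>auto simp: V2_def B1_def E2_def P2_def A1_def\<close>)
      ultimately show ?thesis by simp
    next
      case 2
      have "card (insert k {k+2..2*k+1}) = k + 1" by simp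
      moreover have "card (insert k {k+2..2*k+1}) \<le> degree (V1 \<union> V2) (E2 k) v"
        by (rule deg_ge[OF finU]) (use 2 k3 in \<open>auto simp: V2_def B1_def E2_def P2_def A1_def\<close>)
      ultimately show ?thesis by simp
    next
      case 3
      have "card V2 \<le> degree (V1 \<union> V2) (E2 k) v"
        by (rule deg_ge[OF finU]) (use 3 k3 in \<open>auto simp: V2_def B1_def E2_def P2_def A1_def\<close>)
      then show ?thesis using c2 n_def k3 by simp
    next
      case 4
      have "card {2*k+2..<4*k} \<le> degree (V1 \<union> V2) (E2 k) v"
        by (rule deg_ge[OF finU]) (use 4 k3 in \<open>auto simp: V1_def V2_def B1_def E2_def P2_def A1_def\<close>)
      then show ?thesis using k3 by simp
    qed
  qed
  have deg: "real (degree (V1 \<union> V2) (E2 k) v) \<ge> real (card (V1 \<union> V2)) / 4 + 1"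
    if "v \<in> V1 \<union> V2" for v
  proof -
    have "real (k+1) \<le> real (degree (V1 \<union> V2) (E2 k) v)" using dk[OF that] by linarith
    then show ?thesis using cU by simp
  qed
  define S where "S = {0..2*k}"
  have cS: "card S = card (V1 \<union> V2) div 2 + 1" using cU S_def by simp
  have f: "induced_forest (E2 k) S"
  proof (rule forest_by_order)
    show "\<forall>u v. E2 k u v \<longrightarrow> E2 k v u" by (auto simp: E2_def)
  next
    fix v u1 u2 assume "v \<in> S" "u1 \<in> S" "u2 \<in> S" "u1 < v" "u2 < v" "E2 k v u1" "E2 k v u2"
    then show "u1 = u2" using k3
      by (auto simp: E2_def P2_def A1_def B1_def S_def)
  qed
  have "S \<inter> V1 = {0, k+1}" using S_def V1_def A1_def k3 by auto
  then have "real (card (S \<inter> V1)) = 2" by simp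
  moreover have "S \<subseteq> V1 \<union> V2" using S_def V1_def V2_def A1_def B1_def by auto
  ultimately show ?thesis using bb deg cS f n_def k_def
    apply -
    apply (rule exI[of _ n])
    apply (rule conjI, simp)
    apply (rule exI[of _ V1], rule exI[of _ V2], rule exI[of _ "E2 k"])
    by blast
qed

definition A3 :: "nat \<Rightarrow> nat set" where "A3 k = {1..k} \<union> {2*k+1..3*k}"
definition B3 :: "nat \<Rightarrow> nat set" where "B3 k = insert 0 ({k+1..2*k} \<union> {3*k+1..<4*k})"
definition P3 :: "nat \<Rightarrow> nat \<Rightarrow> nat \<Rightarrow> bool" where
  "P3 k u v \<longleftrightarrow> u \<in> A3 k \<and> v \<in> B3 k \<and> (u \<le> 2*k \<and> v \<le> 2*k \<longrightarrow> v = 0 \<or> v = u + k)"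
definition E3 :: "nat \<Rightarrow> nat \<Rightarrow> nat \<Rightarrow> bool" where
  "E3 k u v \<longleftrightarrow> P3 k u v \<or> P3 k v u"

lemma case3:
  "\<exists>n\<ge>m. \<exists>(V1::nat set) V2 E.
      balanced_bipartite n V1 V2 E \<and>
      (\<forall>v \<in> V1 \<union> V2. real (degree (V1 \<union> V2) E v) \<ge> real (card (V1 \<union> V2)) / 4 + 1) \<and>
      (\<exists>S \<subseteq> V1 \<union> V2. card S = card (V1 \<union> V2) div 2 + 1 \<and> induced_forest E S \<and>
         (\<exists>Vi \<in> {V1, V2}. real (card (S \<inter> Vi)) = real (card (V1 \<union> V2)) / 4))"
proof -
  define k where "k = m + 1"
  define n where "n = 2*k"
  define V1 where "V1 = A3 k"
  define V2 where "V2 = B3 k"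
  have k1: "k \<ge> 1" using k_def by simp
  have dis: "V1 \<inter> V2 = {}" using V1_def V2_def A3_def B3_def k1 by auto
  have c1: "card V1 = n"
  proof -
    have "card ({1..k} \<union> {2*k+1..3*k}) = card {1..k} + card {2*k+1..3*k}"
      by (rule card_Un_disjoint) auto
    then show ?thesis using V1_def A3_def n_def k1 by simp
  qed
  have c2: "card V2 = n"
  proof -
    have "card ({k+1..2*k} \<union> {3*k+1..<4*k}) = card {k+1..2*k} + card {3*k+1..<4*k}"
      by (rule card_Un_disjoint) auto
    moreover have "0 \<notin> {k+1..2*k} \<union> {3*k+1..<4*k}" by auto
    ultimately show ?thesis using V2_def B3_def n_def k1 by simp
  qed
  have finU: "finite (V1 \<union> V2)" using V1_def V2_def A3_def B3_def by simp
  have cU: "card (V1 \<union> V2) = 4*k" using card_Un_disjoint[of V1 V2] dis c1 c2 n_def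
      V1_def V2_def A3_def B3_def by simp
  have bb: "balanced_bipartite n V1 V2 (E3 k)"
    unfolding balanced_bipartite_def using dis c1 c2 V1_def V2_def
    by (auto simp: E3_def P3_def A3_def B3_def)
  have dk: "k + 1 \<le> degree (V1 \<union> V2) (E3 k) v" if v: "v \<in> V1 \<union> V2" for v
  proof -
    consider "v \<in> {1..k}" | "v \<in> {2*k+1..3*k}" | "v = 0" | "v \<in> {k+1..2*k}" | "v \<in> {3*k+1..<4*k}"
      using v V1_def A3_def V2_def B3_def by auto
    then show ?thesis
    proof cases
      case 1
      have "card ({0, v+k} \<union> {3*k+1..<4*k}) = card {0, v+k} + card {3*k+1..<4*k}"
        by (rule card_Un_disjoint) (use 1 in auto)
      moreover have "card {0, v+k} = 2" using 1 by simp
      ultimately have "card ({0, v+k} \<union> {3*k+1..<4*k}) = k + 1" using k1 by simp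
      moreover have "card ({0, v+k} \<union> {3*k+1..<4*k}) \<le> degree (V1 \<union> V2) (E3 k) v"
        by (rule deg_ge[OF finU]) (use 1 k1 in \<open>auto simp: V1_def V2_def B3_def E3_def P3_def A3_def\<close>)
      ultimately show ?thesis by simp
    next
      case 2
      have "card V2 \<le> degree (V1 \<union> V2) (E3 k) v"
        by (rule deg_ge[OF finU]) (use 2 k1 in \<open>auto simp: V2_def B3_def E3_def P3_def A3_def\<close>)
      then show ?thesis using c2 n_def k1 by simp
    next
      case 3
      have "card V1 \<le> degree (V1 \<union> V2) (E3 k) v"
        by (rule deg_ge[OF finU]) (use 3 k1 in \<open>auto simp: V1_def B3_def E3_def P3_def A3_def\<close>)
      then show ?thesis using c1 n_def k1 by simp
    next
      case 4
      have "v - k \<notin> {2*k+1..3*k}" using 4 by auto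
      then have "card (insert (v-k) {2*k+1..3*k}) = k + 1" by simp
      moreover have "card (insert (v-k) {2*k+1..3*k}) \<le> degree (V1 \<union> V2) (E3 k) v"
        by (rule deg_ge[OF finU]) (use 4 k1 in \<open>auto simp: V1_def V2_def B3_def E3_def P3_def A3_def\<close>)
      ultimately show ?thesis by simp
    next
      case 5
      have "card V1 \<le> degree (V1 \<union> V2) (E3 k) v"
        by (rule deg_ge[OF finU]) (use 5 k1 in \<open>auto simp: V1_def B3_def E3_def P3_def A3_def\<close>)
      then show ?thesis using c1 n_def k1 by simp
    qed
  qed
  have deg: "real (degree (V1 \<union> V2) (E3 k) v) \<ge> real (card (V1 \<union> V2)) / 4 + 1"
    if "v \<in> V1 \<union> V2" for v
  proof -
    have "real (k+1) \<le> real (degree (V1 \<union> V2) (E3 k) v)" using dk[OF that] by linarith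
    then show ?thesis using cU by simp
  qed
  define S where "S = {0..2*k}"
  have cS: "card S = card (V1 \<union> V2) div 2 + 1" using cU S_def by simp
  have f: "induced_forest (E3 k) S"
  proof (rule forest_by_order)
    show "\<forall>u v. E3 k u v \<longrightarrow> E3 k v u" by (auto simp: E3_def)
  next
    fix v u1 u2 assume "v \<in> S" "u1 \<in> S" "u2 \<in> S" "u1 < v" "u2 < v" "E3 k v u1" "E3 k v u2"
    then show "u1 = u2" using k1
      by (auto simp: E3_def P3_def A3_def B3_def S_def)
  qed
  have "S \<inter> V1 = {1..k}" using S_def V1_def A3_def k1 by auto
  then have "real (card (S \<inter> V1)) = real (card (V1 \<union> V2)) / 4" using cU by simp
  moreover have "S \<subseteq> V1 \<union> V2" using S_def V1_def V2_def A3_def B3_def by auto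
  ultimately show ?thesis using bb deg cS f n_def k_def
    apply -
    apply (rule exI[of _ n])
    apply (rule conjI, simp)
    apply (rule exI[of _ V1], rule exI[of _ V2], rule exI[of _ "E3 k"])
    by blast
qed

theorem theorem2p6:
  shows "\<forall>lam \<in> {(\<lambda>N::nat. 1::real), (\<lambda>N. 2), (\<lambda>N. real N / 4)}.
    \<forall>m::nat. \<exists>n\<ge>m. \<exists>(V1::nat set) V2 E.
      balanced_bipartite n V1 V2 E \<and>
      (\<forall>v \<in> V1 \<union> V2. real (degree (V1 \<union> V2) E v) \<ge> real (card (V1 \<union> V2)) / 4 + 1) \<and>
      (\<exists>S \<subseteq> V1 \<union> V2. card S = card (V1 \<union> V2) div 2 + 1 \<and> induced_forest E S \<and>
         (\<exists>Vi \<in> {V1, V2}. real (card (S \<inter> Vi)) = lam (card (V1 \<union> V2))))"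
proof (intro ballI allI)
  fix lam :: "nat \<Rightarrow> real" and m :: nat
  assume "lam \<in> {(\<lambda>N::nat. 1::real), (\<lambda>N. 2), (\<lambda>N. real N / 4)}"
  then consider "lam = (\<lambda>N. 1)" | "lam = (\<lambda>N. 2)" | "lam = (\<lambda>N. real N / 4)" by blast
  then show "\<exists>n\<ge>m. \<exists>(V1::nat set) V2 E.
      balanced_bipartite n V1 V2 E \<and>
      (\<forall>v \<in> V1 \<union> V2. real (degree (V1 \<union> V2) E v) \<ge> real (card (V1 \<union> V2)) / 4 + 1) \<and>
      (\<exists>S \<subseteq> V1 \<union> V2. card S = card (V1 \<union> V2) div 2 + 1 \<and> induced_forest E S \<and>
         (\<exists>Vi \<in> {V1, V2}. real (card (S \<inter> Vi)) = lam (card (V1 \<union> V2))))"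
  proof cases
    case 1 show ?thesis using case1[of m] by (simp only: 1)
  next
    case 2 show ?thesis using case2[of m] by (simp only: 2)
  next
    case 3 show ?thesis using case3[of m] by (simp only: 3)
  qed
qed

end
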